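(* Let $(p_i)_{i\ge1}$ be a sequence of integers $p_i\ge 2$ and let $H_k$ be the iterated wreath product $\wr_{i=1}^{k}C_{p_i}$, realized as below. Let $f_{k,k+1}:H_k\to H_{k+1}$ be the injective homomorphism extending an automorphism of the $k$-level tree to the $(k+1)$-level tree by trivial vertex permutations at level $k$. Then the direct limit $\varinjlim H_k$ of the direct system $(H_k,f_{k,k+1})$ has commutator width $1$.
   Context: Let $T_k$ be the rooted tree with levels $0,1,\dots,k$ in which every vertex at level $i-1$ has $p_i$ children labelled $1,\dots,p_i$. $H_k$ is the group of automorphisms of $T_k$ such that at every vertex of level $i-1$ ($1\le i\le k$) the induced permutation of its children is a power of the cycle $(1,2,\dots,p_i)$; this group is isomorphic to the iterated permutational wreath product of the cyclic groups $C_{p_1},\dots,C_{p_k}$. The commutator width $cw(G)$ is the maximum, over elements $g$ of the derived subgroup $G'$, of the least number of commutators whose product is $g$. *)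

theory Defs
  imports "HOL-Algebra.Algebra" "HOL-Library.Extended_Nat"
begin

text \<open>Vertices of T_k are words v of length at most k with v!j < p (j+1); the
  vertex v lies at level (length v), and a vertex at level i-1 has p i children
  v@[c], c < p i (labels 0..p_i - 1 instead of 1..p_i).\<close>

definition tree_V :: "(nat \<Rightarrow> nat) \<Rightarrow> nat \<Rightarrow> nat list set" where
  "tree_V p k = {v. length v \<le> k \<and> (\<forall>j<length v. v ! j < p (Suc j))}"

text \<open>Automorphisms of T_k (extended by the identity outside the vertex set) such that
  at every non-leaf vertex the induced permutation of the children is a power of the
  cycle (0 1 ... p_i - 1).\<close>

definition wr_carrier :: "(nat \<Rightarrow> nat) \<Rightarrow> nat \<Rightarrow> (nat list \<Rightarrow> nat list) set" where
  "wr_carrier p k = {g.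
     bij_betw g (tree_V p k) (tree_V p k) \<and>
     (\<forall>v. v \<notin> tree_V p k \<longrightarrow> g v = v) \<and>
     (\<forall>v\<in>tree_V p k. length (g v) = length v \<and>
                     (v \<noteq> [] \<longrightarrow> g (butlast v) = butlast (g v))) \<and>
     (\<forall>v\<in>tree_V p k. length v < k \<longrightarrow>
        (\<exists>r. \<forall>c<p (Suc (length v)).
               g (v @ [c]) = g v @ [(c + r) mod p (Suc (length v))]))}"

definition wr_group :: "(nat \<Rightarrow> nat) \<Rightarrow> nat \<Rightarrow> (nat list \<Rightarrow> nat list) monoid" where
  "wr_group p k = \<lparr>carrier = wr_carrier p k, monoid.mult = (\<lambda>g h. g \<circ> h), one = id\<rparr>"

definition wr_ext :: "(nat \<Rightarrow> nat) \<Rightarrow> nat \<Rightarrow> (nat list \<Rightarrow> nat list) \<Rightarrow> (nat list \<Rightarrow> nat list)" where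
  "wr_ext p k g = (\<lambda>v. if v \<in> tree_V p (Suc k) \<and> length v = Suc k
                        then g (butlast v) @ [last v] else g v)"

text \<open>fiter f k n = f_{n-1} o ... o f_k for k \<le> n (identity if n \<le> k).\<close>

fun fiter :: "(nat \<Rightarrow> 'a \<Rightarrow> 'a) \<Rightarrow> nat \<Rightarrow> nat \<Rightarrow> 'a \<Rightarrow> 'a" where
  "fiter f k 0 x = x"
| "fiter f k (Suc n) x = (if Suc n \<le> k then x else f n (fiter f k n x))"

definition dl_rel :: "(nat \<Rightarrow> ('a, 'b) monoid_scheme) \<Rightarrow> (nat \<Rightarrow> 'a \<Rightarrow> 'a)
                      \<Rightarrow> ((nat \<times> 'a) \<times> (nat \<times> 'a)) set" where
  "dl_rel G f = {((k, x), (m, y)). x \<in> carrier (G k) \<and> y \<in> carrier (G m) \<and>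
                   (\<exists>n. k \<le> n \<and> m \<le> n \<and> fiter f k n x = fiter f m n y)}"

definition direct_limit :: "(nat \<Rightarrow> ('a, 'b) monoid_scheme) \<Rightarrow> (nat \<Rightarrow> 'a \<Rightarrow> 'a)
                            \<Rightarrow> (nat \<times> 'a) set monoid" where
  "direct_limit G f = \<lparr>
     carrier = (SIGMA k:UNIV. carrier (G k)) // dl_rel G f,
     monoid.mult = (\<lambda>A B. SOME C. \<exists>k x m y. (k, x) \<in> A \<and> (m, y) \<in> B \<and>
               C = dl_rel G f `` {(max k m,
                     fiter f k (max k m) x \<otimes>\<^bsub>G (max k m)\<^esub> fiter f m (max k m) y)}),
     one = dl_rel G f `` {(0, \<one>\<^bsub>G 0\<^esub>)}\<rparr>"

definition commutator :: "('a, 'b) monoid_scheme \<Rightarrow> 'a \<Rightarrow> 'a \<Rightarrow> 'a" where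
  "commutator G x y = x \<otimes>\<^bsub>G\<^esub> y \<otimes>\<^bsub>G\<^esub> inv\<^bsub>G\<^esub> x \<otimes>\<^bsub>G\<^esub> inv\<^bsub>G\<^esub> y"

fun mprod :: "('a, 'b) monoid_scheme \<Rightarrow> 'a list \<Rightarrow> 'a" where
  "mprod G [] = \<one>\<^bsub>G\<^esub>"
| "mprod G (a # as) = a \<otimes>\<^bsub>G\<^esub> mprod G as"

definition is_comm_prod :: "('a, 'b) monoid_scheme \<Rightarrow> nat \<Rightarrow> 'a \<Rightarrow> bool" where
  "is_comm_prod G n g = (\<exists>xs ys. length xs = n \<and> length ys = n \<and>
      set xs \<subseteq> carrier G \<and> set ys \<subseteq> carrier G \<and>
      g = mprod G (map2 (commutator G) xs ys))"

definition commutator_length :: "('a, 'b) monoid_scheme \<Rightarrow> 'a \<Rightarrow> nat" where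
  "commutator_length G g = (LEAST n. is_comm_prod G n g)"

definition commutator_width :: "('a, 'b) monoid_scheme \<Rightarrow> enat" where
  "commutator_width G = (SUP g \<in> derived G (carrier G). enat (commutator_length G g))"

end

theory Submission
  imports Defs
begin


lemma tree_V_Nil[simp]: "[] \<in> tree_V p k"
  by (simp add: tree_V_def)

lemma tree_V_snoc: "v @ [c] \<in> tree_V p k \<longleftrightarrow> v \<in> tree_V p k \<and> length v < k \<and> c < p (Suc (length v))"
  unfolding tree_V_def
  by (auto simp: nth_append split: if_splits) (metis less_SucI less_Suc_eq)

lemma tree_V_mono: "k \<le> k' \<Longrightarrow> v \<in> tree_V p k \<Longrightarrow> v \<in> tree_V p k'"
  by (auto simp: tree_V_def)

lemma tree_V_Suc_le: "length v \<le> k \<Longrightarrow> v \<in> tree_V p (Suc k) \<longleftrightarrow> v \<in> tree_V p k"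
  by (auto simp: tree_V_def)

lemma finite_tree_V: "finite (tree_V p k)"
proof -
  have "tree_V p k \<subseteq> {xs. set xs \<subseteq> {..<(\<Sum>j<k. p (Suc j))} \<and> length xs \<le> k}"
  proof
    fix v assume v: "v \<in> tree_V p k"
    have "x < (\<Sum>j<k. p (Suc j))" if "x \<in> set v" for x
    proof -
      obtain j where j: "j < length v" "v ! j = x" using \<open>x \<in> set v\<close> by (auto simp: in_set_conv_nth)
      have "x < p (Suc j)" using v j by (auto simp: tree_V_def)
      also have "p (Suc j) \<le> (\<Sum>j<k. p (Suc j))"
        using j v by (intro member_le_sum) (auto simp: tree_V_def)
      finally show ?thesis .
    qed
    then show "v \<in> {xs. set xs \<subseteq> {..<(\<Sum>j<k. p (Suc j))} \<and> length xs \<le> k}"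
      using v by (auto simp: tree_V_def)
  qed
  moreover have "finite {xs. set xs \<subseteq> {..<(\<Sum>j<k. p (Suc j))} \<and> length xs \<le> k}"
    by (rule finite_lists_length_le) simp
  ultimately show ?thesis by (rule finite_subset)
qed

lemma mod_add_inj:
  assumes "c < P" "d < P" "(c + r) mod P = (d + (r::nat)) mod P"
  shows "c = d"
proof -
  have P: "0 < P" using assms by simp
  have key: "((x + r) mod P + (P - r mod P)) mod P = x mod P" for x
  proof -
    have "((x + r) mod P + (P - r mod P)) mod P = (x + r + (P - r mod P)) mod P"
      by (simp add: mod_add_left_eq)
    also have "x + r + (P - r mod P) = x + (r div P + 1) * P"
    proof -
      define q m where "q = r div P" and "m = r mod P"
      have r: "r = q * P + m" "m < P" using P by (simp_all add: q_def m_def)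
      show ?thesis unfolding m_def[symmetric] q_def[symmetric] using r by (simp add: algebra_simps)
    qed
    also have "(x + (r div P + 1) * P) mod P = x mod P" by (rule mod_mult_self1)
    finally show ?thesis .
  qed
  have "c mod P = d mod P" using key[of c] key[of d] assms(3) by simp
  then show ?thesis using assms by simp
qed

definition good :: "(nat \<Rightarrow> nat) \<Rightarrow> nat \<Rightarrow> (nat list \<Rightarrow> nat list) \<Rightarrow> bool" where
  "good p k g \<longleftrightarrow> (\<forall>v. v \<notin> tree_V p k \<longrightarrow> g v = v) \<and> g [] = [] \<and>
     (\<forall>v\<in>tree_V p k. length v < k \<longrightarrow>
        (\<exists>r. \<forall>c<p (Suc (length v)). g (v @ [c]) = g v @ [(c + r) mod p (Suc (length v))]))"

locale wr =
  fixes p :: "nat \<Rightarrow> nat"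
  assumes p2: "\<And>j. 2 \<le> p (Suc j)"
begin

lemma ppos[simp]: "0 < p (Suc j)"
  using p2[of j] by simp

lemma good_props:
  assumes "good p k g" "v \<in> tree_V p k"
  shows "g v \<in> tree_V p k \<and> length (g v) = length v"
  using assms(2)
proof (induction v rule: rev_induct)
  case Nil then show ?case using assms(1) by (simp add: good_def)
next
  case (snoc c v)
  then have v: "v \<in> tree_V p k" "length v < k" "c < p (Suc (length v))"
    by (auto simp: tree_V_snoc)
  then obtain r where r: "\<forall>c<p (Suc (length v)). g (v @ [c]) = g v @ [(c + r) mod p (Suc (length v))]"
    using assms(1) v(1,2) unfolding good_def by blast
  show ?case using snoc.IH[OF v(1)] r v by (auto simp: tree_V_snoc)
qed

lemma good_snoc:
  assumes "good p k g" "v @ [c] \<in> tree_V p k"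
  shows "\<exists>d. g (v @ [c]) = g v @ [d]"
proof -
  have v: "v \<in> tree_V p k" "length v < k" "c < p (Suc (length v))"
    using assms(2) by (auto simp: tree_V_snoc)
  then obtain r where r: "\<forall>c<p (Suc (length v)). g (v @ [c]) = g v @ [(c + r) mod p (Suc (length v))]"
    using assms(1) v(1,2) unfolding good_def by blast
  then show ?thesis using v by auto
qed

lemma good_inj:
  assumes "good p k g"
  shows "inj_on g (tree_V p k)"
proof -
  have "\<forall>w. w \<in> tree_V p k \<longrightarrow> g v = g w \<longrightarrow> v = w" if "v \<in> tree_V p k" for v
    using that
  proof (induction v rule: rev_induct)
    case Nil
    then show ?case using good_props[OF assms] assms by (auto simp: good_def) (metis length_0_conv)
  next
    case (snoc c v)
    then have v: "v \<in> tree_V p k" "length v < k" "c < p (Suc (length v))"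
      by (auto simp: tree_V_snoc)
    then obtain r where r: "\<forall>c<p (Suc (length v)). g (v @ [c]) = g v @ [(c + r) mod p (Suc (length v))]"
      using assms(1) v(1,2) unfolding good_def by blast
    show ?case
    proof (intro allI impI)
      fix w assume w: "w \<in> tree_V p k" and eq: "g (v @ [c]) = g w"
      show "v @ [c] = w"
      proof (cases w rule: rev_cases)
        case Nil
        then show ?thesis using eq assms good_props[OF assms snoc.prems] by (auto simp: good_def)
      next
        case (snoc u d)
        then have u: "u \<in> tree_V p k" "length u < k" "d < p (Suc (length u))"
          using w by (auto simp: tree_V_snoc)
        have "g v = g u" using eq r v u snoc good_snoc[OF assms(1), of u d]
          by (auto simp: tree_V_snoc)
        then have vu: "v = u" using snoc.IH[OF v(1)] u(1) by blast
        have "g v @ [(c + r) mod p (Suc (length v))] = g v @ [(d + r) mod p (Suc (length v))]"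
          using eq r v u snoc vu by simp
        then have "(c + r) mod p (Suc (length v)) = (d + r) mod p (Suc (length v))" by simp
        then have "c = d" using mod_add_inj v(3) u(3) vu by blast
        then show ?thesis using vu snoc by simp
      qed
    qed
  qed
  then show ?thesis unfolding inj_on_def by blast
qed

lemma good_bij:
  assumes "good p k g"
  shows "bij_betw g (tree_V p k) (tree_V p k)"
proof -
  have "g ` tree_V p k \<subseteq> tree_V p k" using good_props[OF assms] by auto
  then have "g ` tree_V p k = tree_V p k"
    using endo_inj_surj[OF finite_tree_V _ good_inj[OF assms]] by blast
  then show ?thesis using good_inj[OF assms] by (simp add: bij_betw_def)
qed

lemma carrier_good: "g \<in> wr_carrier p k \<longleftrightarrow> good p k g"
proof
  assume g: "g \<in> wr_carrier p k"
  have "length (g []) = 0" using g by (auto simp: wr_carrier_def)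
  then show "good p k g" using g by (auto simp: wr_carrier_def good_def)
next
  assume g: "good p k g"
  have "g (butlast v) = butlast (g v)" if "v \<in> tree_V p k" "v \<noteq> []" for v
  proof -
    obtain u c where v: "v = u @ [c]" using \<open>v \<noteq> []\<close> by (cases v rule: rev_cases) auto
    then show ?thesis using good_snoc[OF g] that by fastforce
  qed
  then show "g \<in> wr_carrier p k"
    using g good_bij[OF g] good_props[OF g] by (auto simp: wr_carrier_def good_def)
qed

definition rot :: "(nat list \<Rightarrow> nat list) \<Rightarrow> nat list \<Rightarrow> nat" where
  "rot g v = last (g (v @ [0]))"

lemma rot_eq:
  assumes "good p k g" "v \<in> tree_V p k" "length v < k" "c < p (Suc (length v))"
  shows "g (v @ [c]) = g v @ [(c + rot g v) mod p (Suc (length v))]"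
    and "rot g v < p (Suc (length v))"
proof -
  obtain r where r: "\<forall>c<p (Suc (length v)). g (v @ [c]) = g v @ [(c + r) mod p (Suc (length v))]"
    using assms unfolding good_def by blast
  have "rot g v = r mod p (Suc (length v))" using r by (simp add: rot_def)
  then show "g (v @ [c]) = g v @ [(c + rot g v) mod p (Suc (length v))]"
    using r assms by (simp add: mod_add_right_eq)
  show "rot g v < p (Suc (length v))" using \<open>rot g v = _\<close> by simp
qed

lemma good_id: "good p k id"
  by (auto simp: good_def) (metis mod_less add_0_right)

lemma good_comp:
  assumes g: "good p k g" and h: "good p k h"
  shows "good p k (g \<circ> h)"
  unfolding good_def
proof (intro conjI allI impI ballI)
  fix v assume "v \<notin> tree_V p k" then show "(g \<circ> h) v = v" using g h by (simp add: good_def)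
next
  show "(g \<circ> h) [] = []" using g h by (simp add: good_def)
next
  fix v assume v: "v \<in> tree_V p k" "length v < k"
  have hv: "h v \<in> tree_V p k" "length (h v) = length v" using good_props[OF h v(1)] by auto
  show "\<exists>r. \<forall>c<p (Suc (length v)). (g \<circ> h) (v @ [c]) = (g \<circ> h) v @ [(c + r) mod p (Suc (length v))]"
  proof (intro exI allI impI)
    fix c assume c: "c < p (Suc (length v))"
    have "(g \<circ> h) (v @ [c]) = g (h v @ [(c + rot h v) mod p (Suc (length v))])"
      using rot_eq(1)[OF h v c] by simp
    also have "\<dots> = g (h v) @ [((c + rot h v) mod p (Suc (length v)) + rot g (h v)) mod p (Suc (length v))]"
      using rot_eq(1)[OF g hv(1)] hv v by simp
    also have "\<dots> = (g \<circ> h) v @ [(c + (rot h v + rot g (h v))) mod p (Suc (length v))]"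
      by (simp add: mod_add_left_eq add.assoc)
    finally show "(g \<circ> h) (v @ [c]) = (g \<circ> h) v @ [(c + (rot h v + rot g (h v))) mod p (Suc (length v))]" .
  qed
qed

definition ginv :: "nat \<Rightarrow> (nat list \<Rightarrow> nat list) \<Rightarrow> (nat list \<Rightarrow> nat list)" where
  "ginv k g = (\<lambda>v. if v \<in> tree_V p k then inv_into (tree_V p k) g v else v)"

lemma ginv_props:
  assumes g: "good p k g"
  shows "good p k (ginv k g)" "g \<circ> ginv k g = id" "ginv k g \<circ> g = id"
proof -
  have bij: "bij_betw g (tree_V p k) (tree_V p k)" by (rule good_bij[OF g])
  have gi: "g (ginv k g v) = v" for v
    using bij g by (auto simp: ginv_def good_def bij_betw_inv_into_right)
  have ig: "ginv k g (g v) = v" for v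
  proof (cases "v \<in> tree_V p k")
    case True
    then show ?thesis using bij good_props[OF g True]
      by (auto simp: ginv_def bij_betw_inv_into_left)
  next
    case False then show ?thesis using g by (auto simp: ginv_def good_def)
  qed
  have giT: "ginv k g v \<in> tree_V p k" if "v \<in> tree_V p k" for v
    using that bij by (auto simp: ginv_def bij_betw_def inv_into_into)
  show "g \<circ> ginv k g = id" "ginv k g \<circ> g = id" using gi ig by auto
  show "good p k (ginv k g)"
    unfolding good_def
  proof (intro conjI allI impI ballI)
    fix v assume "v \<notin> tree_V p k" then show "ginv k g v = v" by (simp add: ginv_def)
  next
    show "ginv k g [] = []" using ig[of "[]"] g by (simp add: good_def)
  next
    fix v assume v: "v \<in> tree_V p k" "length v < k"
    define w where "w = ginv k g v"
    have w: "w \<in> tree_V p k" "g w = v" using giT[OF v(1)] gi by (auto simp: w_def)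
    have lw: "length w = length v" using good_props[OF g w(1)] w by simp
    define P where "P = p (Suc (length v))"
    have rw: "rot g w < P" using rot_eq(2)[OF g w(1), of 0] lw v P_def by simp
    show "\<exists>r. \<forall>c<p (Suc (length v)). ginv k g (v @ [c]) = ginv k g v @ [(c + r) mod p (Suc (length v))]"
    proof (intro exI allI impI)
      fix c assume c: "c < p (Suc (length v))"
      have "g (w @ [(c + (P - rot g w)) mod P]) = v @ [((c + (P - rot g w)) mod P + rot g w) mod P]"
        using rot_eq(1)[OF g w(1)] w lw v P_def by simp
      also have "((c + (P - rot g w)) mod P + rot g w) mod P = c"
        using rw c P_def by (simp add: mod_add_left_eq)
      finally have "g (w @ [(c + (P - rot g w)) mod P]) = v @ [c]" .
      then have "ginv k g (v @ [c]) = w @ [(c + (P - rot g w)) mod P]" using ig by metis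
      then show "ginv k g (v @ [c]) = ginv k g v @ [(c + (P - rot g w)) mod p (Suc (length v))]"
        by (simp add: w_def P_def)
    qed
  qed
qed

lemma group_wr: "group (wr_group p k)"
proof (rule groupI)
  show "\<And>x y. x \<in> carrier (wr_group p k) \<Longrightarrow> y \<in> carrier (wr_group p k) \<Longrightarrow>
      x \<otimes>\<^bsub>wr_group p k\<^esub> y \<in> carrier (wr_group p k)"
    by (simp add: wr_group_def carrier_good good_comp)
  show "\<one>\<^bsub>wr_group p k\<^esub> \<in> carrier (wr_group p k)"
    by (simp add: wr_group_def carrier_good good_id)
  show "\<And>x y z. x \<otimes>\<^bsub>wr_group p k\<^esub> y \<otimes>\<^bsub>wr_group p k\<^esub> z = x \<otimes>\<^bsub>wr_group p k\<^esub> (y \<otimes>\<^bsub>wr_group p k\<^esub> z)"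
    by (simp add: wr_group_def comp_assoc)
  show "\<And>x. \<one>\<^bsub>wr_group p k\<^esub> \<otimes>\<^bsub>wr_group p k\<^esub> x = x"
    by (simp add: wr_group_def)
  show "\<exists>y\<in>carrier (wr_group p k). y \<otimes>\<^bsub>wr_group p k\<^esub> x = \<one>\<^bsub>wr_group p k\<^esub>"
    if "x \<in> carrier (wr_group p k)" for x
    using that ginv_props[of k x] by (auto simp: wr_group_def carrier_good)
qed

end


context wr
begin

definition ext2 :: "nat \<Rightarrow> (nat list \<Rightarrow> nat list) \<Rightarrow> (nat list \<Rightarrow> nat) \<Rightarrow> nat list \<Rightarrow> nat list" where
  "ext2 k g m = (\<lambda>v. if v \<in> tree_V p (Suc k) \<and> length v = Suc k
       then g (butlast v) @ [(last v + m (butlast v)) mod p (Suc k)] else g v)"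

lemma ext2_low: "length v \<le> k \<Longrightarrow> ext2 k g m v = g v"
  by (simp add: ext2_def)

lemma ext2_top: "u \<in> tree_V p k \<Longrightarrow> length u = k \<Longrightarrow> c < p (Suc k) \<Longrightarrow>
    ext2 k g m (u @ [c]) = g u @ [(c + m u) mod p (Suc k)]"
  using tree_V_mono[of k "Suc k" u p] by (simp add: ext2_def tree_V_snoc)

lemma ext2_good:
  assumes g: "good p k g"
  shows "good p (Suc k) (ext2 k g m)"
  unfolding good_def
proof (intro conjI allI impI ballI)
  fix v assume v: "v \<notin> tree_V p (Suc k)"
  then have "v \<notin> tree_V p k" using tree_V_mono[of k "Suc k"] by auto
  then show "ext2 k g m v = v" using v g by (simp add: ext2_def good_def)
next
  show "ext2 k g m [] = []" using g by (simp add: ext2_def good_def)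
next
  fix v assume v: "v \<in> tree_V p (Suc k)" "length v < Suc k"
  show "\<exists>r. \<forall>c<p (Suc (length v)). ext2 k g m (v @ [c]) = ext2 k g m v @ [(c + r) mod p (Suc (length v))]"
  proof (cases "length v < k")
    case True
    then have vk: "v \<in> tree_V p k" using v tree_V_Suc_le[of v k] by simp
    then obtain r where r: "\<forall>c<p (Suc (length v)). g (v @ [c]) = g v @ [(c + r) mod p (Suc (length v))]"
      using g True unfolding good_def by blast
    show ?thesis using r True by (intro exI[of _ r]) (simp add: ext2_low)
  next
    case False
    then have lv: "length v = k" using v by simp
    then have vk: "v \<in> tree_V p k" using v tree_V_Suc_le[of v k] by simp
    show ?thesis using lv vk by (intro exI[of _ "m v"]) (simp add: ext2_top ext2_low)
  qed
qed

lemma rot_ext2: "u \<in> tree_V p k \<Longrightarrow> length u = k \<Longrightarrow> rot (ext2 k g m) u = m u mod p (Suc k)"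
  by (simp add: rot_def ext2_top)

lemma rot_ext2_low: "length u < k \<Longrightarrow> rot (ext2 k g m) u = rot g u"
  by (simp add: rot_def ext2_low)

lemma wr_ext_eq: "wr_ext p k g = ext2 k g (\<lambda>_. 0)"
proof
  fix v
  show "wr_ext p k g v = ext2 k g (\<lambda>_. 0) v"
  proof (cases "v \<in> tree_V p (Suc k) \<and> length v = Suc k")
    case True
    then have "v \<noteq> []" by auto
    then have "last v = v ! k" using True by (simp add: last_conv_nth)
    then have "last v < p (Suc k)" using True
      by (auto simp: tree_V_def)
    then show ?thesis using True by (simp add: wr_ext_def ext2_def)
  qed (auto simp: wr_ext_def ext2_def)
qed

lemma wr_ext_good: "good p k g \<Longrightarrow> good p (Suc k) (wr_ext p k g)"
  by (simp add: wr_ext_eq ext2_good)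

lemma wr_ext_low: "length v \<le> k \<Longrightarrow> wr_ext p k g v = g v"
  by (simp add: wr_ext_eq ext2_low)

lemma wr_ext_comp:
  assumes g: "good p k g" and h: "good p k h"
  shows "wr_ext p k (g \<circ> h) = wr_ext p k g \<circ> wr_ext p k h"
proof
  fix v
  show "wr_ext p k (g \<circ> h) v = (wr_ext p k g \<circ> wr_ext p k h) v"
  proof (cases "v \<in> tree_V p (Suc k) \<and> length v = Suc k")
    case True
    then obtain u c where v: "v = u @ [c]" by (cases v rule: rev_cases) auto
    then have u: "u \<in> tree_V p k" "length u = k" "c < p (Suc k)"
      using True tree_V_Suc_le[of u k] by (auto simp: tree_V_snoc)
    have hu: "h u \<in> tree_V p k" "length (h u) = k" using good_props[OF h u(1)] u by auto
    show ?thesis using u hu v by (simp add: wr_ext_eq ext2_top)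
  next
    case False
    show ?thesis
    proof (cases "v \<in> tree_V p (Suc k)")
      case True
      then have lv: "length v \<le> k" using False by (auto simp: tree_V_def)
      then have "v \<in> tree_V p k" using True tree_V_Suc_le by blast
      then have "length (h v) \<le> k" using good_props[OF h] lv by auto
      then show ?thesis using lv by (simp add: wr_ext_low)
    next
      case nT: False
      then have "v \<notin> tree_V p k" using tree_V_mono[of k "Suc k"] by auto
      then have "g v = v" "h v = v" using g h by (auto simp: good_def)
      then show ?thesis using nT by (simp add: wr_ext_def)
    qed
  qed
qed

definition res :: "nat \<Rightarrow> (nat list \<Rightarrow> nat list) \<Rightarrow> nat list \<Rightarrow> nat list" where
  "res k g = (\<lambda>v. if length v \<le> k then g v else v)"

lemma res_good:
  assumes g: "good p (Suc k) g"
  shows "good p k (res k g)"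
  unfolding good_def
proof (intro conjI allI impI ballI)
  fix v assume v: "v \<notin> tree_V p k"
  show "res k g v = v"
  proof (cases "length v \<le> k")
    case True
    then have "v \<notin> tree_V p (Suc k)" using v tree_V_Suc_le by blast
    then show ?thesis using g True by (simp add: res_def good_def)
  qed (simp add: res_def)
next
  show "res k g [] = []" using g by (simp add: res_def good_def)
next
  fix v assume v: "v \<in> tree_V p k" "length v < k"
  then have v': "v \<in> tree_V p (Suc k)" "length v < Suc k" using tree_V_mono[of k "Suc k"] by auto
  then obtain r where r: "\<forall>c<p (Suc (length v)). g (v @ [c]) = g v @ [(c + r) mod p (Suc (length v))]"
    using g unfolding good_def by blast
  show "\<exists>r. \<forall>c<p (Suc (length v)). res k g (v @ [c]) = res k g v @ [(c + r) mod p (Suc (length v))]"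
    using r v by (intro exI[of _ r]) (simp add: res_def)
qed

lemma rot_res: "length u < k \<Longrightarrow> rot (res k g) u = rot g u"
  by (simp add: rot_def res_def)

subsection \<open>Odometer\<close>

fun top :: "nat \<Rightarrow> nat list" where
  "top 0 = []"
| "top (Suc k) = top k @ [p (Suc k) - 1]"

fun odo :: "nat \<Rightarrow> nat list \<Rightarrow> nat list" where
  "odo 0 = id"
| "odo (Suc k) = ext2 k (odo k) (\<lambda>u. if u = top k then 1 else 0)"

lemma odo_good: "good p k (odo k)"
proof (induction k)
  case 0 show ?case using good_id[of 0] by (simp only: odo.simps)
next
  case (Suc k) then show ?case by (simp add: ext2_good)
qed

lemma odo_low: "length v \<le> k \<Longrightarrow> odo (Suc k) v = odo k v"
  by (simp add: ext2_low)

definition NN :: "nat \<Rightarrow> nat" where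
  "NN j = (\<Prod>l<j. p (Suc l))"

definition num :: "nat list \<Rightarrow> nat" where
  "num v = (\<Sum>j<length v. v ! j * NN j)"

lemma NN_Suc: "NN (Suc j) = NN j * p (Suc j)"
  by (simp add: NN_def)

lemma NN_pos: "0 < NN j"
  by (simp add: NN_def)

lemma num_snoc: "num (v @ [c]) = num v + c * NN (length v)"
  by (simp add: num_def nth_append)

lemma num_Nil[simp]: "num [] = 0"
  by (simp add: num_def)

lemma num_bound: "v \<in> tree_V p k \<Longrightarrow> num v < NN (length v)"
proof (induction v rule: rev_induct)
  case Nil then show ?case by (simp add: NN_pos)
next
  case (snoc c v)
  then have v: "v \<in> tree_V p k" "c < p (Suc (length v))" by (auto simp: tree_V_snoc)
  have "num (v @ [c]) < NN (length v) + c * NN (length v)"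
    using snoc.IH[OF v(1)] by (simp add: num_snoc)
  also have "\<dots> = Suc c * NN (length v)" by simp
  also have "\<dots> \<le> p (Suc (length v)) * NN (length v)"
    using v(2) by (intro mult_le_mono1) simp
  finally show ?case by (simp add: NN_Suc mult.commute)
qed

lemma num_inj:
  "v \<in> tree_V p k \<Longrightarrow> w \<in> tree_V p k \<Longrightarrow> length v = length w \<Longrightarrow> num v = num w \<Longrightarrow> v = w"
proof (induction v arbitrary: w rule: rev_induct)
  case Nil then show ?case by simp
next
  case (snoc c v)
  then obtain w' d where w: "w = w' @ [d]" by (cases w rule: rev_cases) auto
  have v: "v \<in> tree_V p k" using snoc by (auto simp: tree_V_snoc)
  have w': "w' \<in> tree_V p k" using snoc w by (auto simp: tree_V_snoc)
  have l: "length v = length w'" using snoc w by simp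
  have b: "num v < NN (length v)" "num w' < NN (length v)"
    using num_bound[OF v] num_bound[OF w'] l by auto
  have e: "num v + c * NN (length v) = num w' + d * NN (length v)"
    using snoc.prems w l by (simp add: num_snoc)
  have "(num v + c * NN (length v)) mod NN (length v) = num v" using b by simp
  moreover have "(num w' + d * NN (length v)) mod NN (length v) = num w'" using b by simp
  ultimately have nv: "num v = num w'" using e by simp
  then have "c * NN (length v) = d * NN (length v)" using e by simp
  then have "c = d" using NN_pos[of "length v"] by simp
  then show ?case using snoc.IH[OF v w' l nv] w by simp
qed

lemma top_props: "top k \<in> tree_V p k \<and> length (top k) = k \<and> num (top k) = NN k - 1"
proof (induction k)
  case 0 then show ?case by (simp add: NN_def)
next
  case (Suc k)
  have P: "0 < p (Suc k)" by simp
  have N: "0 < NN k" by (rule NN_pos)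
  have t: "top k @ [p (Suc k) - 1] \<in> tree_V p (Suc k)"
    using Suc tree_V_mono[of k "Suc k"] by (simp add: tree_V_snoc)
  have "num (top (Suc k)) = NN k - 1 + (p (Suc k) - 1) * NN k"
    using Suc by (simp add: num_snoc)
  also have "\<dots> = NN k * p (Suc k) - 1"
  proof -
    have "(p (Suc k) - 1) * NN k = p (Suc k) * NN k - 1 * NN k" by (rule diff_mult_distrib)
    then have "(p (Suc k) - 1) * NN k = NN k * p (Suc k) - NN k" by (simp add: mult.commute)
    moreover have "NN k \<le> NN k * p (Suc k)" using p2[of k] by simp
    ultimately show ?thesis using N by simp
  qed
  finally show ?case using t Suc by (simp add: NN_Suc)
qed

lemma odo_num:
  assumes "u \<in> tree_V p k" "length u = k"
  shows "num (odo k u) = (num u + 1) mod NN k"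
  using assms
proof (induction k arbitrary: u)
  case 0 then show ?case by (simp add: NN_def)
next
  case (Suc k)
  then obtain v c where u: "u = v @ [c]" by (cases u rule: rev_cases) auto
  then have v: "v \<in> tree_V p k" "length v = k" "c < p (Suc k)"
    using Suc.prems tree_V_Suc_le[of v k] by (auto simp: tree_V_snoc)
  have ov: "odo k v \<in> tree_V p k" "length (odo k v) = k" using good_props[OF odo_good v(1)] v by auto
  define N where "N = NN k"
  define P where "P = p (Suc k)"
  have N: "0 < N" by (simp add: N_def NN_pos)
  have nv: "num v < N" using num_bound[OF v(1)] v by (simp add: N_def)
  have odou: "odo (Suc k) u = odo k v @ [(c + (if v = top k then 1 else 0)) mod P]"
    using v u by (simp add: ext2_top P_def)
  show ?case
  proof (cases "v = top k")
    case True
    then have "num v = N - 1" using top_props[of k] by (simp add: N_def)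
    then have "num (odo k v) = 0" using Suc.IH[OF v(1,2)] N by (simp add: N_def)
    then have "num (odo (Suc k) u) = ((c + 1) mod P) * N"
      using odou True ov by (simp add: num_snoc N_def)
    also have "\<dots> = ((c + 1) * N) mod (P * N)" by (rule mod_mult_mult2[symmetric])
    also have "(c + 1) * N = num u + 1"
      using \<open>num v = N - 1\<close> N u v by (simp add: num_snoc N_def algebra_simps)
    finally show ?thesis by (simp add: NN_Suc N_def P_def mult.commute)
  next
    case False
    then have "num v \<noteq> N - 1" using top_props[of k] num_inj[OF v(1), of "top k"] v by (auto simp: N_def)
    then have nv1: "num v + 1 < N" using nv by simp
    then have "num (odo k v) = num v + 1" using Suc.IH[OF v(1,2)] by (simp add: N_def)
    then have e: "num (odo (Suc k) u) = num v + 1 + c * N"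
      using odou False ov v by (simp add: num_snoc N_def P_def)
    have "num v + 1 + c * N < N + c * N" using nv1 by simp
    also have "\<dots> = Suc c * N" by simp
    also have "\<dots> \<le> P * N" using v(3) by (intro mult_le_mono1) (simp add: P_def)
    finally have "num u + 1 < NN (Suc k)" using u v by (simp add: num_snoc N_def P_def NN_Suc mult.commute)
    then show ?thesis using e u v by (simp add: num_snoc N_def)
  qed
qed

subsection \<open>Level sums\<close>

definition L :: "nat \<Rightarrow> nat list set" where
  "L i = {v. v \<in> tree_V p i \<and> length v = i}"

lemma L_iff: "i \<le> k \<Longrightarrow> v \<in> L i \<longleftrightarrow> v \<in> tree_V p k \<and> length v = i"
  by (auto simp: L_def tree_V_def)

lemma finite_L: "finite (L i)"
  using finite_tree_V[of p i] by (simp add: L_def)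

lemma bij_L:
  assumes g: "good p k g" and i: "i \<le> k"
  shows "bij_betw g (L i) (L i)"
proof -
  have sub: "L i \<subseteq> tree_V p k" using L_iff[OF i] by auto
  have inj: "inj_on g (L i)" using inj_on_subset[OF good_inj[OF g] sub] .
  have "g ` L i \<subseteq> L i" using good_props[OF g] L_iff[OF i] by auto
  then have "g ` L i = L i" using endo_inj_surj[OF finite_L _ inj] by blast
  then show ?thesis using inj by (simp add: bij_betw_def)
qed

definition sig :: "(nat list \<Rightarrow> nat list) \<Rightarrow> nat \<Rightarrow> int" where
  "sig g i = (\<Sum>u\<in>L i. int (rot g u)) mod int (p (Suc i))"

definition D :: "nat \<Rightarrow> (nat list \<Rightarrow> nat list) set" where
  "D k = {g. good p k g \<and> (\<forall>i<k. sig g i = 0)}"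

lemma rot_comp:
  assumes g: "good p k g" and h: "good p k h" and u: "u \<in> tree_V p k" "length u < k"
  shows "rot (g \<circ> h) u = (rot h u + rot g (h u)) mod p (Suc (length u))"
proof -
  have hu: "h u \<in> tree_V p k" "length (h u) = length u" using good_props[OF h u(1)] by auto
  have "(g \<circ> h) (u @ [0]) = g (h u @ [rot h u mod p (Suc (length u))])"
    using rot_eq(1)[OF h u, of 0] by simp
  also have "\<dots> = g (h u) @ [(rot h u mod p (Suc (length u)) + rot g (h u)) mod p (Suc (length u))]"
    using rot_eq(1)[OF g hu(1)] hu u by simp
  finally show ?thesis by (simp add: rot_def mod_add_left_eq)
qed

lemma sig_comp:
  assumes g: "good p k g" and h: "good p k h" and i: "i < k"
  shows "sig (g \<circ> h) i = (sig g i + sig h i) mod int (p (Suc i))"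
proof -
  define P where "P = p (Suc i)"
  have "sig (g \<circ> h) i = (\<Sum>u\<in>L i. int ((rot h u + rot g (h u)) mod P)) mod int P"
    unfolding sig_def P_def
    using rot_comp[OF g h] L_iff[of i k] i by (intro arg_cong2[where f="(mod)"] sum.cong) auto
  also have "\<dots> = (\<Sum>u\<in>L i. (int (rot h u) + int (rot g (h u))) mod int P) mod int P"
    by (simp add: zmod_int)
  also have "\<dots> = (\<Sum>u\<in>L i. (int (rot h u) + int (rot g (h u)))) mod int P"
    by (rule mod_sum_eq)
  also have "\<dots> = ((\<Sum>u\<in>L i. int (rot h u)) + (\<Sum>u\<in>L i. int (rot g (h u)))) mod int P"
    by (simp add: sum.distrib)
  also have "(\<Sum>u\<in>L i. int (rot g (h u))) = (\<Sum>u\<in>L i. int (rot g u))"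
    using sum.reindex_bij_betw[OF bij_L[OF h], of i "\<lambda>u. int (rot g u)"] i by simp
  also have "((\<Sum>u\<in>L i. int (rot h u)) + (\<Sum>u\<in>L i. int (rot g u))) mod int P = (sig g i + sig h i) mod int (p (Suc i))"
    unfolding sig_def P_def by (simp add: mod_add_eq add.commute)
  finally show ?thesis .
qed

lemma sig_id: "sig id i = 0"
  by (simp add: sig_def rot_def)

lemma D_comp: assumes "g \<in> D k" "h \<in> D k" shows "g \<circ> h \<in> D k"
proof -
  have g: "good p k g" "good p k h" using assms by (auto simp: D_def)
  have "sig (g \<circ> h) i = 0" if "i < k" for i
    using sig_comp[OF g that] assms that by (simp add: D_def)
  then show ?thesis using good_comp[OF g] by (simp add: D_def)
qed

lemma wr_carrier_eq: "carrier (wr_group p k) = {g. good p k g}"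
  by (auto simp: wr_group_def carrier_good)

lemma D_commutator:
  assumes x: "x \<in> carrier (wr_group p k)" and y: "y \<in> carrier (wr_group p k)"
  shows "commutator (wr_group p k) x y \<in> D k"
proof -
  interpret G: group "wr_group p k" by (rule group_wr)
  define x' where "x' = inv\<^bsub>wr_group p k\<^esub> x"
  define y' where "y' = inv\<^bsub>wr_group p k\<^esub> y"
  have gx: "good p k x" "good p k y" "good p k x'" "good p k y'"
    using x y G.inv_closed[OF x] G.inv_closed[OF y] by (auto simp: wr_carrier_eq x'_def y'_def)
  have xx: "x \<circ> x' = id" "y \<circ> y' = id"
    using G.r_inv[OF x] G.r_inv[OF y] by (auto simp: x'_def y'_def wr_group_def)
  have c: "commutator (wr_group p k) x y = x \<circ> y \<circ> x' \<circ> y'"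
    by (simp add: commutator_def wr_group_def x'_def y'_def)
  have "sig (x \<circ> y \<circ> x' \<circ> y') i = 0" if i: "i < k" for i
  proof -
    define P where "P = int (p (Suc i))"
    have sx: "(sig x i + sig x' i) mod P = 0" using sig_comp[OF gx(1) gx(3) i] xx sig_id by (simp add: P_def)
    have sy: "(sig y i + sig y' i) mod P = 0" using sig_comp[OF gx(2) gx(4) i] xx sig_id by (simp add: P_def)
    have "sig (x \<circ> y \<circ> x' \<circ> y') i = (((sig x i + sig y i) mod P + sig x' i) mod P + sig y' i) mod P"
      using sig_comp[OF good_comp[OF good_comp[OF gx(1,2)] gx(3)] gx(4) i]
        sig_comp[OF good_comp[OF gx(1,2)] gx(3) i] sig_comp[OF gx(1,2) i] by (simp add: P_def)
    also have "\<dots> = ((sig x i + sig x' i) + (sig y i + sig y' i)) mod P"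
      by (simp add: mod_simps algebra_simps)
    also have "\<dots> = ((sig x i + sig x' i) mod P + (sig y i + sig y' i) mod P) mod P"
      by (simp add: mod_simps)
    finally show ?thesis using sx sy by simp
  qed
  then show ?thesis using c gx by (simp add: D_def good_comp)
qed

lemma D_wr_ext: "g \<in> D k \<Longrightarrow> wr_ext p k g \<in> D (Suc k)"
proof -
  assume g: "g \<in> D k"
  have "sig (wr_ext p k g) i = 0" if i: "i < Suc k" for i
  proof (cases "i < k")
    case True
    have "sig (wr_ext p k g) i = sig g i"
      unfolding sig_def wr_ext_eq
      using True L_iff[of i i] by (intro arg_cong2[where f="(mod)"] sum.cong) (auto simp: rot_ext2_low)
    then show ?thesis using g True by (simp add: D_def)
  next
    case False
    then have "i = k" using i by simp
    then show ?thesis unfolding sig_def wr_ext_eq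
      using L_iff[of k k] by (simp add: rot_ext2)
  qed
  then show ?thesis using g by (simp add: D_def wr_ext_good)
qed

lemma D_res: "g \<in> D (Suc k) \<Longrightarrow> res k g \<in> D k"
proof -
  assume g: "g \<in> D (Suc k)"
  have "sig (res k g) i = sig g i" if i: "i < k" for i
    unfolding sig_def
    using i L_iff[of i i] by (intro arg_cong2[where f="(mod)"] sum.cong) (auto simp: rot_res)
  then show ?thesis using g by (simp add: D_def res_good)
qed

end


context wr
begin

lemma good_length: "good p k f \<Longrightarrow> length (f v) = length v"
  using good_props[of k f v] by (cases "v \<in> tree_V p k") (auto simp: good_def)

lemma D0: "g \<in> D 0 \<Longrightarrow> g = id"
proof
  fix v assume g: "g \<in> D 0"
  show "g v = id v"
  proof (cases "v \<in> tree_V p 0")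
    case True then have "v = []" by (simp add: tree_V_def)
    then show ?thesis using g by (simp add: D_def good_def)
  qed (use g in \<open>simp add: D_def good_def\<close>)
qed

lemma main_step:
  assumes g: "g \<in> D (Suc k)"
    and b0: "good p k b0"
    and IH: "res k g \<circ> b0 \<circ> odo k = odo k \<circ> b0"
  shows "\<exists>b. good p (Suc k) b \<and> g \<circ> b \<circ> odo (Suc k) = odo (Suc k) \<circ> b"
proof -
  define a where "a = odo (Suc k)"
  define P where "P = p (Suc k)"
  have P: "0 < P" by (simp add: P_def)
  have ga: "good p (Suc k) a" using odo_good[of "Suc k"] by (simp only: a_def)
  have gg: "good p (Suc k) g" using g by (simp add: D_def)
  define n where "n u = int (rot a (b0 u)) - int (rot a u) - int (rot g (b0 (odo k u)))" for u
  define S where "S u = (\<Sum>u'\<in>{u'\<in>L k. num u' < num u}. n u')" for u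
  define m where "m u = nat (S u mod int P)" for u
  have mS: "int (m u) = S u mod int P" for u using P by (simp add: m_def)
  define b where "b = ext2 k b0 m"
  have gb: "good p (Suc k) b" by (simp add: b_def ext2_good b0)
  have Lk: "u \<in> L k \<longleftrightarrow> u \<in> tree_V p k \<and> length u = k" for u using L_iff[of k k] by simp
  have tot: "(\<Sum>u\<in>L k. n u) mod int P = 0"
  proof -
    have s1: "(\<Sum>u\<in>L k. int (rot a (b0 u))) = (\<Sum>u\<in>L k. int (rot a u))"
      using sum.reindex_bij_betw[OF bij_L[OF b0, of k], of "\<lambda>u. int (rot a u)"] by simp
    have bij2: "bij_betw (b0 \<circ> odo k) (L k) (L k)"
      using bij_betw_trans[OF bij_L[OF odo_good, of k k] bij_L[OF b0, of k]] by simp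
    have s2: "(\<Sum>u\<in>L k. int (rot g (b0 (odo k u)))) = (\<Sum>u\<in>L k. int (rot g u))"
      using sum.reindex_bij_betw[OF bij2, of "\<lambda>u. int (rot g u)"] by simp
    have "(\<Sum>u\<in>L k. n u) = - (\<Sum>u\<in>L k. int (rot g u))"
      unfolding n_def using s1 s2 by (simp add: sum_subtractf)
    moreover have "(\<Sum>u\<in>L k. int (rot g u)) mod int P = 0"
      using g by (simp add: D_def sig_def P_def)
    ultimately show ?thesis by (simp add: zmod_zminus1_eq_if)
  qed
  have mprop: "(int (m (odo k u)) - int (m u) - n u) mod int P = 0" if u: "u \<in> L k" for u
  proof -
    have uT: "u \<in> tree_V p k" "length u = k" using u Lk by auto
    have nb: "num u < NN k" using num_bound[OF uT(1)] uT by simp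
    have on: "num (odo k u) = (num u + 1) mod NN k" by (rule odo_num[OF uT])
    have key: "(S (odo k u) - S u - n u) mod int P = 0"
    proof (cases "num u + 1 < NN k")
      case True
      then have on': "num (odo k u) = num u + 1" using on by simp
      have "{u'\<in>L k. num u' < num u + 1} = insert u {u'\<in>L k. num u' < num u}"
      proof (rule Set.set_eqI)
        fix x
        have "x = u" if "x \<in> L k" "num x = num u" using num_inj[of x k u] that uT Lk by auto
        then show "x \<in> {u'\<in>L k. num u' < num u + 1} \<longleftrightarrow> x \<in> insert u {u'\<in>L k. num u' < num u}"
          using u by (auto simp: less_Suc_eq)
      qed
      then have "S (odo k u) = n u + S u"
        unfolding S_def on' using finite_L[of k] by simp
      then show ?thesis by simp
    next
      case False
      then have nu: "num u + 1 = NN k" using nb by simp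
      then have "num (odo k u) = 0" using on by simp
      then have s0: "S (odo k u) = 0" by (simp add: S_def)
      have "{u'\<in>L k. num u' < num u} = L k - {u}"
      proof (rule Set.set_eqI)
        fix x
        have "num x < NN k \<and> num x \<noteq> num u" if x: "x \<in> L k - {u}"
          using num_bound[of x k] num_inj[of x k u] Lk uT x by auto
        then show "x \<in> {u'\<in>L k. num u' < num u} \<longleftrightarrow> x \<in> L k - {u}"
          using nu by auto
      qed
      then have "S u = (\<Sum>u\<in>L k. n u) - n u"
        unfolding S_def using finite_L[of k] u by (simp add: sum_diff1)
      then have "S (odo k u) - S u - n u = - (\<Sum>u\<in>L k. n u)" using s0 by simp
      then show ?thesis using tot by (simp add: zmod_zminus1_eq_if)
    qed
    have "(S (odo k u) mod int P - S u mod int P - n u) mod int P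
        = ((S (odo k u) mod int P - S u mod int P) mod int P - n u) mod int P"
      by (rule mod_diff_left_eq[symmetric])
    also have "\<dots> = ((S (odo k u) - S u) mod int P - n u) mod int P"
      by (simp only: mod_diff_eq)
    also have "\<dots> = (S (odo k u) - S u - n u) mod int P"
      by (rule mod_diff_left_eq)
    finally show ?thesis using key unfolding mS by simp
  qed
  have low: "g (b (a v)) = a (b v)" if lv: "length v \<le> k" for v
  proof -
    have a1: "a v = odo k v" using odo_low[OF lv] by (simp only: a_def)
    have l1: "length (odo k v) \<le> k" using lv good_length[OF odo_good] by simp
    have b1: "b (odo k v) = b0 (odo k v)" using l1 by (simp add: b_def ext2_low)
    have l2: "length (b0 (odo k v)) \<le> k" using l1 good_length[OF b0] by simp
    have g1: "g (b0 (odo k v)) = res k g (b0 (odo k v))" using l2 by (simp add: res_def)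
    have b2: "b v = b0 v" using lv by (simp add: b_def ext2_low)
    have l3: "length (b0 v) \<le> k" using lv good_length[OF b0] by simp
    have a2: "a (b0 v) = odo k (b0 v)" using odo_low[OF l3] by (simp only: a_def)
    show ?thesis using fun_cong[OF IH, of v] a1 b1 g1 b2 a2 by simp
  qed
  have "g (b (a v)) = a (b v)" for v
  proof (cases "v \<in> tree_V p (Suc k)")
    case False
    then show ?thesis using ga gb gg by (simp add: good_def)
  next
    case True
    show ?thesis
    proof (cases "length v \<le> k")
      case True then show ?thesis by (rule low)
    next
      case False
      then have lv: "length v = Suc k" using \<open>v \<in> tree_V p (Suc k)\<close> by (auto simp: tree_V_def)
      then obtain u c where v: "v = u @ [c]" by (cases v rule: rev_cases) auto
      then have uc: "u \<in> tree_V p (Suc k)" "length u = k" "c < P"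
        using True lv by (auto simp: tree_V_snoc P_def)
      then have uk: "u \<in> tree_V p k" using tree_V_Suc_le[of u k] by simp
      define w where "w = odo k u"
      have w: "w \<in> tree_V p k" "length w = k" using good_props[OF odo_good uk] uc by (auto simp: w_def)
      define w' where "w' = b0 w"
      have w': "w' \<in> tree_V p k" "length w' = k" using good_props[OF b0 w(1)] w by (auto simp: w'_def)
      have w'S: "w' \<in> tree_V p (Suc k)" using w' tree_V_mono[of k "Suc k"] by auto
      have bu: "b0 u \<in> tree_V p k" "length (b0 u) = k" using good_props[OF b0 uk] uc by auto
      have buS: "b0 u \<in> tree_V p (Suc k)" using bu tree_V_mono[of k "Suc k"] by auto
      have au: "a u = w" using odo_low[of u k] uc by (simp only: a_def w_def order_refl)
      have pre: "g w' = a (b0 u)"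
        using low[of u] uc au w(2) by (simp add: b_def ext2_low w'_def w_def)
      have Pk: "p (Suc (length u)) = P" using uc by (simp add: P_def)
      have lhs: "g (b (a v)) = g w' @ [(((c + rot a u) mod P + m w) mod P + rot g w') mod P]"
      proof -
        have "a v = w @ [(c + rot a u) mod P]" using rot_eq(1)[OF ga uc(1)] uc v au Pk by simp
        moreover have "b (w @ [(c + rot a u) mod P]) = w' @ [((c + rot a u) mod P + m w) mod P]"
          using w P by (simp add: b_def ext2_top w'_def P_def)
        moreover have "g (w' @ [((c + rot a u) mod P + m w) mod P]) = g w' @ [(((c + rot a u) mod P + m w) mod P + rot g w') mod P]"
          using rot_eq(1)[OF gg w'S] w' P by (simp add: P_def)
        ultimately show ?thesis by simp
      qed
      have rhs: "a (b v) = a (b0 u) @ [((c + m u) mod P + rot a (b0 u)) mod P]"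
      proof -
        have "b v = b0 u @ [(c + m u) mod P]" using v uk uc by (simp add: b_def ext2_top P_def)
        moreover have "a (b0 u @ [(c + m u) mod P]) = a (b0 u) @ [((c + m u) mod P + rot a (b0 u)) mod P]"
          using rot_eq(1)[OF ga buS] bu P by (simp add: P_def)
        ultimately show ?thesis by simp
      qed
      have mp: "(int (m w) - int (m u) - n u) mod int P = 0"
        using mprop[of u] uk uc Lk by (simp add: w_def)
      have "int ((((c + rot a u) mod P + m w) mod P + rot g w') mod P)
          = int (((c + m u) mod P + rot a (b0 u)) mod P)"
      proof -
        have e1: "int ((((c + rot a u) mod P + m w) mod P + rot g w') mod P)
            = (int c + int (rot a u) + int (m w) + int (rot g w')) mod int P"
          by (simp add: zmod_int mod_simps)
        have e2: "int (((c + m u) mod P + rot a (b0 u)) mod P) = (int c + int (m u) + int (rot a (b0 u))) mod int P"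
          by (simp add: zmod_int mod_simps)
        have "int P dvd (int c + int (rot a u) + int (m w) + int (rot g w')) - (int c + int (m u) + int (rot a (b0 u)))"
          using mp unfolding n_def w'_def w_def by (simp add: dvd_eq_mod_eq_0 algebra_simps)
        then show ?thesis unfolding e1 e2 by (simp add: mod_eq_dvd_iff)
      qed
      then have "(((c + rot a u) mod P + m w) mod P + rot g w') mod P = ((c + m u) mod P + rot a (b0 u)) mod P"
        by simp
      then show ?thesis using lhs rhs pre by simp
    qed
  qed
  then have "g \<circ> b \<circ> a = a \<circ> b" by auto
  then show ?thesis using gb a_def by blast
qed

lemma main_lemma: "g \<in> D k \<Longrightarrow> \<exists>b. good p k b \<and> g \<circ> b \<circ> odo k = odo k \<circ> b"
proof (induction k arbitrary: g)
  case 0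
  then have "g = id" by (rule D0)
  then show ?case using good_id[of 0] by auto
next
  case (Suc k)
  have "res k g \<in> D k" using Suc.prems by (rule D_res)
  then obtain b0 where "good p k b0" "res k g \<circ> b0 \<circ> odo k = odo k \<circ> b0" using Suc.IH by blast
  then show ?case using main_step[OF Suc.prems] by blast
qed

lemma D_is_commutator:
  assumes g: "g \<in> D k"
  shows "\<exists>x\<in>carrier (wr_group p k). \<exists>y\<in>carrier (wr_group p k). g = commutator (wr_group p k) x y"
proof -
  interpret G: group "wr_group p k" by (rule group_wr)
  obtain b where b: "good p k b" "g \<circ> b \<circ> odo k = odo k \<circ> b" using main_lemma[OF g] by blast
  have a: "odo k \<in> carrier (wr_group p k)" by (simp add: wr_carrier_eq odo_good)
  have bc: "b \<in> carrier (wr_group p k)" using b by (simp add: wr_carrier_eq)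
  have gc: "g \<in> carrier (wr_group p k)" using g by (simp add: wr_carrier_eq D_def)
  have eq: "odo k \<otimes>\<^bsub>wr_group p k\<^esub> b = g \<otimes>\<^bsub>wr_group p k\<^esub> b \<otimes>\<^bsub>wr_group p k\<^esub> odo k"
    using b by (simp add: wr_group_def)
  have "commutator (wr_group p k) (odo k) b = g"
    unfolding commutator_def eq
    using a bc gc by (simp add: G.m_assoc G.r_inv)
  then show ?thesis using a bc by metis
qed

end


lemma fiter_le: "n \<le> k \<Longrightarrow> fiter f k n x = x"
  by (induction n) auto

lemma fiter_Suc: "k \<le> n \<Longrightarrow> fiter f k (Suc n) x = f n (fiter f k n x)"
  by simp

lemma fiter_trans: "k \<le> m \<Longrightarrow> m \<le> n \<Longrightarrow> fiter f m n (fiter f k m x) = fiter f k n x"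
proof (induction n)
  case 0 then show ?case by simp
next
  case (Suc n)
  show ?case
  proof (cases "m = Suc n")
    case True then show ?thesis by (simp add: fiter_le)
  next
    case False
    then have "m \<le> n" using Suc.prems by simp
    then show ?thesis using Suc by simp
  qed
qed

context wr
begin

abbreviation RR where "RR \<equiv> dl_rel (wr_group p) (wr_ext p)"
abbreviation LL where "LL \<equiv> direct_limit (wr_group p) (wr_ext p)"
abbreviation SS where "SS \<equiv> (SIGMA k:UNIV. carrier (wr_group p k))"
abbreviation io where "io k x \<equiv> RR `` {(k, x)}"

lemma wr_ext_id: "wr_ext p k id = id"
  by (auto simp: wr_ext_def fun_eq_iff intro: append_butlast_last_id)

lemma fiter_good: "good p k x \<Longrightarrow> k \<le> n \<Longrightarrow> good p n (fiter (wr_ext p) k n x)"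
proof (induction n)
  case 0 then show ?case by simp
next
  case (Suc n)
  show ?case
  proof (cases "k \<le> n")
    case True then show ?thesis using Suc by (simp add: wr_ext_good)
  next
    case False then have "k = Suc n" using Suc.prems by simp
    then show ?thesis using Suc.prems by simp
  qed
qed

lemma fiter_carrier: "x \<in> carrier (wr_group p k) \<Longrightarrow> k \<le> n \<Longrightarrow> fiter (wr_ext p) k n x \<in> carrier (wr_group p n)"
  by (simp add: wr_carrier_eq fiter_good)

lemma fiter_comp: "good p k x \<Longrightarrow> good p k y \<Longrightarrow> k \<le> n \<Longrightarrow>
    fiter (wr_ext p) k n (x \<circ> y) = fiter (wr_ext p) k n x \<circ> fiter (wr_ext p) k n y"
proof (induction n)
  case 0 then show ?case by simp
next
  case (Suc n)
  show ?case
  proof (cases "k \<le> n")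
    case True then show ?thesis
      by (simp only: fiter_Suc[OF True] Suc.IH[OF Suc.prems(1,2) True]
          wr_ext_comp[OF fiter_good[OF Suc.prems(1) True] fiter_good[OF Suc.prems(2) True]])
  next
    case False then have "k = Suc n" using Suc.prems by simp
    then show ?thesis by simp
  qed
qed

lemma fiter_id: "fiter (wr_ext p) k n id = id"
proof (induction n)
  case 0 show ?case by (simp only: fiter.simps)
next
  case (Suc n)
  show ?case
  proof (cases "k \<le> n")
    case True then show ?thesis by (simp only: fiter_Suc[OF True] Suc.IH wr_ext_id)
  next
    case False then show ?thesis by (simp only: fiter_le[of "Suc n" k] not_le Suc_le_eq)
  qed
qed

lemma fiter_low: "length v \<le> k \<Longrightarrow> fiter (wr_ext p) k n x v = x v"
proof (induction n)
  case 0 then show ?case by simp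
next
  case (Suc n)
  then show ?case by (auto simp: wr_ext_low)
qed

lemma fiter_D: "g \<in> D k \<Longrightarrow> k \<le> n \<Longrightarrow> fiter (wr_ext p) k n g \<in> D n"
proof (induction n)
  case 0 then show ?case by simp
next
  case (Suc n)
  show ?case
  proof (cases "k \<le> n")
    case True then show ?thesis using Suc by (simp add: D_wr_ext)
  next
    case False then have "k = Suc n" using Suc.prems by simp
    then show ?thesis using Suc.prems by simp
  qed
qed

lemma RR_equiv: "equiv SS RR"
proof (rule equivI)
  show "RR \<subseteq> SS \<times> SS" by (auto simp: dl_rel_def)
  show "refl_on SS RR" by (auto simp: refl_on_def dl_rel_def)
  show "sym RR" by (auto simp: sym_def dl_rel_def)
  show "trans RR"
  proof (rule transI)
    fix a b c assume ab: "(a, b) \<in> RR" and bc: "(b, c) \<in> RR"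
    obtain k x where a: "a = (k, x)" by (cases a)
    obtain m y where b: "b = (m, y)" by (cases b)
    obtain l z where c: "c = (l, z)" by (cases c)
    obtain n1 where n1: "k \<le> n1" "m \<le> n1" "fiter (wr_ext p) k n1 x = fiter (wr_ext p) m n1 y"
      using ab a b by (auto simp: dl_rel_def)
    obtain n2 where n2: "m \<le> n2" "l \<le> n2" "fiter (wr_ext p) m n2 y = fiter (wr_ext p) l n2 z"
      using bc b c by (auto simp: dl_rel_def)
    define N where "N = max n1 n2"
    have "fiter (wr_ext p) k N x = fiter (wr_ext p) n1 N (fiter (wr_ext p) k n1 x)"
      by (rule fiter_trans[symmetric]) (simp_all add: n1 N_def)
    also have "\<dots> = fiter (wr_ext p) n1 N (fiter (wr_ext p) m n1 y)" by (simp only: n1(3))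
    also have "\<dots> = fiter (wr_ext p) m N y" by (rule fiter_trans) (simp_all add: n1 N_def)
    also have "\<dots> = fiter (wr_ext p) n2 N (fiter (wr_ext p) m n2 y)"
      by (rule fiter_trans[symmetric]) (simp_all add: n2 N_def)
    also have "\<dots> = fiter (wr_ext p) n2 N (fiter (wr_ext p) l n2 z)" by (simp only: n2(3))
    also have "\<dots> = fiter (wr_ext p) l N z" by (rule fiter_trans) (simp_all add: n2 N_def)
    finally have "fiter (wr_ext p) k N x = fiter (wr_ext p) l N z" .
    moreover have "k \<le> N" "l \<le> N" using n1 n2 by (auto simp: N_def)
    ultimately show "(a, c) \<in> RR" using ab bc a c by (auto simp: dl_rel_def)
  qed
qed

lemma io_eq:
  assumes "x \<in> carrier (wr_group p k)" "y \<in> carrier (wr_group p m)"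
  shows "io k x = io m y \<longleftrightarrow> (\<exists>n. k \<le> n \<and> m \<le> n \<and> fiter (wr_ext p) k n x = fiter (wr_ext p) m n y)"
proof -
  have "io k x = io m y \<longleftrightarrow> ((k, x), (m, y)) \<in> RR"
    using eq_equiv_class_iff[OF RR_equiv, of "(k, x)" "(m, y)"] assms by simp
  then show ?thesis using assms by (simp add: dl_rel_def)
qed

lemma io_lift:
  assumes "x \<in> carrier (wr_group p k)" "k \<le> n"
  shows "io k x = io n (fiter (wr_ext p) k n x)"
  using assms fiter_carrier[OF assms]
  by (subst io_eq) (auto intro!: exI[of _ n] simp: fiter_le)

lemma carrier_LL: "carrier LL = {io k x | k x. x \<in> carrier (wr_group p k)}"
  by (auto simp: direct_limit_def quotient_def)

lemma io_carrier: "x \<in> carrier (wr_group p k) \<Longrightarrow> io k x \<in> carrier LL"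
  by (auto simp: carrier_LL)

lemma one_LL: "\<one>\<^bsub>LL\<^esub> = io 0 id"
  by (simp add: direct_limit_def wr_group_def)

lemma mult_same:
  assumes x: "x \<in> carrier (wr_group p N)" and y: "y \<in> carrier (wr_group p N)"
  shows "io N x \<otimes>\<^bsub>LL\<^esub> io N y = io N (x \<otimes>\<^bsub>wr_group p N\<^esub> y)"
proof -
  let ?Q = "\<lambda>C. \<exists>k x' m y'. (k, x') \<in> io N x \<and> (m, y') \<in> io N y \<and>
               C = RR `` {(max k m,
                     fiter (wr_ext p) k (max k m) x' \<otimes>\<^bsub>wr_group p (max k m)\<^esub> fiter (wr_ext p) m (max k m) y')}"
  have refl: "(N, z) \<in> io N z" if "z \<in> carrier (wr_group p N)" for z
    using that by (auto simp: dl_rel_def intro!: exI[of _ N])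
  have Q1: "?Q (io N (x \<otimes>\<^bsub>wr_group p N\<^esub> y))"
    using refl[OF x] refl[OF y] by (intro exI[of _ N] exI[of _ x] exI[of _ y]) (simp add: fiter_le)
  have Q2: "C = io N (x \<otimes>\<^bsub>wr_group p N\<^esub> y)" if "?Q C" for C
  proof -
    obtain k x' m y' where kx: "(k, x') \<in> io N x" and my: "(m, y') \<in> io N y" and
      C: "C = RR `` {(max k m, fiter (wr_ext p) k (max k m) x' \<otimes>\<^bsub>wr_group p (max k m)\<^esub> fiter (wr_ext p) m (max k m) y')}"
      using \<open>?Q C\<close> by blast
    obtain n1 where n1: "N \<le> n1" "k \<le> n1" "fiter (wr_ext p) N n1 x = fiter (wr_ext p) k n1 x'"
      and x': "x' \<in> carrier (wr_group p k)"
      using kx by (auto simp: dl_rel_def)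
    obtain n2 where n2: "N \<le> n2" "m \<le> n2" "fiter (wr_ext p) N n2 y = fiter (wr_ext p) m n2 y'"
      and y': "y' \<in> carrier (wr_group p m)"
      using my by (auto simp: dl_rel_def)
    define M where "M = max k m"
    define n where "n = max n1 n2"
    have Mn: "M \<le> n" "k \<le> M" "m \<le> M" "N \<le> n" using n1 n2 by (auto simp: M_def n_def)
    have gx': "good p k x'" "good p m y'" using x' y' by (auto simp: wr_carrier_eq)
    have gx: "good p N x" "good p N y" using x y by (auto simp: wr_carrier_eq)
    have fx: "fiter (wr_ext p) k n x' = fiter (wr_ext p) N n x"
    proof -
      have "fiter (wr_ext p) k n x' = fiter (wr_ext p) n1 n (fiter (wr_ext p) k n1 x')"
        by (rule fiter_trans[symmetric]) (simp_all add: n1 n_def)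
      also have "\<dots> = fiter (wr_ext p) n1 n (fiter (wr_ext p) N n1 x)" by (simp only: n1(3))
      also have "\<dots> = fiter (wr_ext p) N n x" by (rule fiter_trans) (simp_all add: n1 n_def)
      finally show ?thesis .
    qed
    have fy: "fiter (wr_ext p) m n y' = fiter (wr_ext p) N n y"
    proof -
      have "fiter (wr_ext p) m n y' = fiter (wr_ext p) n2 n (fiter (wr_ext p) m n2 y')"
        by (rule fiter_trans[symmetric]) (simp_all add: n2 n_def)
      also have "\<dots> = fiter (wr_ext p) n2 n (fiter (wr_ext p) N n2 y)" by (simp only: n2(3))
      also have "\<dots> = fiter (wr_ext p) N n y" by (rule fiter_trans) (simp_all add: n2 n_def)
      finally show ?thesis .
    qed
    define z where "z = fiter (wr_ext p) k M x' \<circ> fiter (wr_ext p) m M y'"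
    have zc: "z \<in> carrier (wr_group p M)"
      using fiter_good[OF gx'(1) Mn(2)] fiter_good[OF gx'(2) Mn(3)]
      by (simp add: z_def wr_carrier_eq good_comp)
    have xyc: "x \<circ> y \<in> carrier (wr_group p N)" using gx by (simp add: wr_carrier_eq good_comp)
    have "fiter (wr_ext p) M n z = fiter (wr_ext p) k n x' \<circ> fiter (wr_ext p) m n y'"
      using fiter_comp[OF fiter_good[OF gx'(1) Mn(2)] fiter_good[OF gx'(2) Mn(3)] Mn(1)]
      by (simp add: z_def fiter_trans Mn)
    also have "\<dots> = fiter (wr_ext p) N n (x \<circ> y)"
      using fx fy fiter_comp[OF gx Mn(4)] by simp
    finally have "io M z = io N (x \<circ> y)"
      using io_eq[OF zc xyc] Mn by blast
    then show ?thesis using C by (simp add: M_def z_def wr_group_def)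
  qed
  have "io N x \<otimes>\<^bsub>LL\<^esub> io N y = (SOME C. ?Q C)"
    by (simp add: direct_limit_def)
  also have "\<dots> = io N (x \<otimes>\<^bsub>wr_group p N\<^esub> y)"
    by (rule some_equality[of ?Q, OF Q1 Q2])
  finally show ?thesis .
qed

lemma lift_any:
  assumes "A \<in> carrier LL"
  shows "\<exists>k. \<forall>N\<ge>k. \<exists>x\<in>carrier (wr_group p N). A = io N x"
proof -
  obtain k x where A: "A = io k x" "x \<in> carrier (wr_group p k)" using assms by (auto simp: carrier_LL)
  have "\<exists>z\<in>carrier (wr_group p N). A = io N z" if "k \<le> N" for N
    using io_lift[OF A(2) that] fiter_carrier[OF A(2) that] A(1) by blast
  then show ?thesis by blast
qed

lemma lift2:
  assumes "A \<in> carrier LL" "B \<in> carrier LL"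
  obtains N x y where "x \<in> carrier (wr_group p N)" "y \<in> carrier (wr_group p N)" "A = io N x" "B = io N y"
proof -
  obtain k1 where k1: "\<forall>N\<ge>k1. \<exists>x\<in>carrier (wr_group p N). A = io N x" using lift_any[OF assms(1)] by blast
  obtain k2 where k2: "\<forall>N\<ge>k2. \<exists>x\<in>carrier (wr_group p N). B = io N x" using lift_any[OF assms(2)] by blast
  have "\<exists>x\<in>carrier (wr_group p (max k1 k2)). A = io (max k1 k2) x" using k1 by simp
  then obtain x where "x\<in>carrier (wr_group p (max k1 k2))" "A = io (max k1 k2) x" by blast
  moreover have "\<exists>x\<in>carrier (wr_group p (max k1 k2)). B = io (max k1 k2) x" using k2 by simp
  then obtain y where "y\<in>carrier (wr_group p (max k1 k2))" "B = io (max k1 k2) y" by blast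
  ultimately show ?thesis using that by blast
qed

lemma lift3:
  assumes "A \<in> carrier LL" "B \<in> carrier LL" "C \<in> carrier LL"
  obtains N x y z where "x \<in> carrier (wr_group p N)" "y \<in> carrier (wr_group p N)" "z \<in> carrier (wr_group p N)"
    "A = io N x" "B = io N y" "C = io N z"
proof -
  obtain k1 where k1: "\<forall>N\<ge>k1. \<exists>x\<in>carrier (wr_group p N). A = io N x" using lift_any[OF assms(1)] by blast
  obtain k2 where k2: "\<forall>N\<ge>k2. \<exists>x\<in>carrier (wr_group p N). B = io N x" using lift_any[OF assms(2)] by blast
  obtain k3 where k3: "\<forall>N\<ge>k3. \<exists>x\<in>carrier (wr_group p N). C = io N x" using lift_any[OF assms(3)] by blast
  define M where "M = max k1 (max k2 k3)"
  have "\<exists>x\<in>carrier (wr_group p M). A = io M x" using k1 by (simp add: M_def)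
  then obtain x where "x\<in>carrier (wr_group p M)" "A = io M x" by blast
  moreover have "\<exists>x\<in>carrier (wr_group p M). B = io M x" using k2 by (simp add: M_def)
  then obtain y where "y\<in>carrier (wr_group p M)" "B = io M y" by blast
  moreover have "\<exists>x\<in>carrier (wr_group p M). C = io M x" using k3 by (simp add: M_def)
  then obtain z where "z\<in>carrier (wr_group p M)" "C = io M z" by blast
  ultimately show ?thesis using that by blast
qed

lemma io_id: "io N id = io 0 id"
proof -
  have "id \<in> carrier (wr_group p 0)" by (simp add: wr_carrier_eq good_id)
  then show ?thesis using io_lift[of id 0 N] by (simp add: fiter_id)
qed

lemma assoc_LL:
  assumes A: "A \<in> carrier LL" and B: "B \<in> carrier LL" and C: "C \<in> carrier LL"
  shows "A \<otimes>\<^bsub>LL\<^esub> B \<otimes>\<^bsub>LL\<^esub> C = A \<otimes>\<^bsub>LL\<^esub> (B \<otimes>\<^bsub>LL\<^esub> C)"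
proof -
  obtain N x y z where xyz: "x \<in> carrier (wr_group p N)" "y \<in> carrier (wr_group p N)" "z \<in> carrier (wr_group p N)"
    "A = io N x" "B = io N y" "C = io N z"
    by (rule lift3[OF A B C])
  interpret G: group "wr_group p N" by (rule group_wr)
  have 1: "A \<otimes>\<^bsub>LL\<^esub> B = io N (x \<otimes>\<^bsub>wr_group p N\<^esub> y)"
    using mult_same[OF xyz(1,2)] xyz(4,5) by simp
  have 2: "B \<otimes>\<^bsub>LL\<^esub> C = io N (y \<otimes>\<^bsub>wr_group p N\<^esub> z)"
    using mult_same[OF xyz(2,3)] xyz(5,6) by simp
  have 3: "io N (x \<otimes>\<^bsub>wr_group p N\<^esub> y) \<otimes>\<^bsub>LL\<^esub> io N z = io N ((x \<otimes>\<^bsub>wr_group p N\<^esub> y) \<otimes>\<^bsub>wr_group p N\<^esub> z)"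
    by (rule mult_same[OF G.m_closed[OF xyz(1,2)] xyz(3)])
  have 4: "io N x \<otimes>\<^bsub>LL\<^esub> io N (y \<otimes>\<^bsub>wr_group p N\<^esub> z) = io N (x \<otimes>\<^bsub>wr_group p N\<^esub> (y \<otimes>\<^bsub>wr_group p N\<^esub> z))"
    by (rule mult_same[OF xyz(1) G.m_closed[OF xyz(2,3)]])
  have 5: "(x \<otimes>\<^bsub>wr_group p N\<^esub> y) \<otimes>\<^bsub>wr_group p N\<^esub> z = x \<otimes>\<^bsub>wr_group p N\<^esub> (y \<otimes>\<^bsub>wr_group p N\<^esub> z)"
    by (rule G.m_assoc[OF xyz(1-3)])
  show ?thesis unfolding 1 2 using 3 4 5 xyz(4,6) by simp
qed

lemma one_io: "\<one>\<^bsub>LL\<^esub> = io N \<one>\<^bsub>wr_group p N\<^esub>"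
  by (subst one_LL, subst io_id[of N, symmetric]) (simp add: wr_group_def)

lemma closed_LL:
  assumes A: "A \<in> carrier LL" and B: "B \<in> carrier LL"
  shows "A \<otimes>\<^bsub>LL\<^esub> B \<in> carrier LL"
proof -
  obtain N x y where xy: "x \<in> carrier (wr_group p N)" "y \<in> carrier (wr_group p N)" "A = io N x" "B = io N y"
    by (rule lift2[OF A B])
  interpret G: group "wr_group p N" by (rule group_wr)
  have 1: "A \<otimes>\<^bsub>LL\<^esub> B = io N (x \<otimes>\<^bsub>wr_group p N\<^esub> y)"
    using mult_same[OF xy(1,2)] xy(3,4) by simp
  show ?thesis unfolding 1 by (rule io_carrier[OF G.m_closed[OF xy(1,2)]])
qed

lemma lone_LL:
  assumes A: "A \<in> carrier LL"
  shows "\<one>\<^bsub>LL\<^esub> \<otimes>\<^bsub>LL\<^esub> A = A \<and> (\<exists>B\<in>carrier LL. B \<otimes>\<^bsub>LL\<^esub> A = \<one>\<^bsub>LL\<^esub>)"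
proof -
  obtain N x y where xy: "x \<in> carrier (wr_group p N)" "y \<in> carrier (wr_group p N)" "A = io N x" "A = io N y"
    by (rule lift2[OF A A])
  interpret G: group "wr_group p N" by (rule group_wr)
  have 1: "io N \<one>\<^bsub>wr_group p N\<^esub> \<otimes>\<^bsub>LL\<^esub> io N x = io N (\<one>\<^bsub>wr_group p N\<^esub> \<otimes>\<^bsub>wr_group p N\<^esub> x)"
    by (rule mult_same[OF G.one_closed xy(1)])
  have 2: "io N (inv\<^bsub>wr_group p N\<^esub> x) \<otimes>\<^bsub>LL\<^esub> io N x = io N (inv\<^bsub>wr_group p N\<^esub> x \<otimes>\<^bsub>wr_group p N\<^esub> x)"
    by (rule mult_same[OF G.inv_closed[OF xy(1)] xy(1)])
  have 3: "\<one>\<^bsub>wr_group p N\<^esub> \<otimes>\<^bsub>wr_group p N\<^esub> x = x" by (rule G.l_one[OF xy(1)])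
  have 4: "inv\<^bsub>wr_group p N\<^esub> x \<otimes>\<^bsub>wr_group p N\<^esub> x = \<one>\<^bsub>wr_group p N\<^esub>" by (rule G.l_inv[OF xy(1)])
  have 5: "\<one>\<^bsub>LL\<^esub> = io N \<one>\<^bsub>wr_group p N\<^esub>" by (rule one_io)
  have "\<one>\<^bsub>LL\<^esub> \<otimes>\<^bsub>LL\<^esub> A = A" using 1 3 5 xy(3) by simp
  moreover have "io N (inv\<^bsub>wr_group p N\<^esub> x) \<otimes>\<^bsub>LL\<^esub> A = \<one>\<^bsub>LL\<^esub>" using 2 4 5 xy(3) by simp
  ultimately show ?thesis using io_carrier[OF G.inv_closed[OF xy(1)]] by blast
qed

lemma group_LL: "group LL"
proof (rule groupI)
  show "\<one>\<^bsub>LL\<^esub> \<in> carrier LL"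
    unfolding one_LL by (rule io_carrier) (simp add: wr_carrier_eq good_id)
qed (simp_all add: closed_LL assoc_LL lone_LL)

lemma inv_io:
  assumes x: "x \<in> carrier (wr_group p N)"
  shows "inv\<^bsub>LL\<^esub> (io N x) = io N (inv\<^bsub>wr_group p N\<^esub> x)"
proof -
  interpret G: group "wr_group p N" by (rule group_wr)
  interpret L: group LL by (rule group_LL)
  have 2: "io N (inv\<^bsub>wr_group p N\<^esub> x) \<otimes>\<^bsub>LL\<^esub> io N x = io N (inv\<^bsub>wr_group p N\<^esub> x \<otimes>\<^bsub>wr_group p N\<^esub> x)"
    by (rule mult_same[OF G.inv_closed[OF x] x])
  have 4: "inv\<^bsub>wr_group p N\<^esub> x \<otimes>\<^bsub>wr_group p N\<^esub> x = \<one>\<^bsub>wr_group p N\<^esub>" by (rule G.l_inv[OF x])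
  have "io N (inv\<^bsub>wr_group p N\<^esub> x) \<otimes>\<^bsub>LL\<^esub> io N x = \<one>\<^bsub>LL\<^esub>"
    using 2 4 one_io[of N] by simp
  then show ?thesis
    using L.inv_equality io_carrier[OF G.inv_closed[OF x]] io_carrier[OF x] by blast
qed

lemma comm_io:
  assumes x: "x \<in> carrier (wr_group p N)" and y: "y \<in> carrier (wr_group p N)"
  shows "commutator LL (io N x) (io N y) = io N (commutator (wr_group p N) x y)"
proof -
  interpret G: group "wr_group p N" by (rule group_wr)
  define x' where "x' = inv\<^bsub>wr_group p N\<^esub> x"
  define y' where "y' = inv\<^bsub>wr_group p N\<^esub> y"
  have c: "x' \<in> carrier (wr_group p N)" "y' \<in> carrier (wr_group p N)"
    using x y by (simp_all add: x'_def y'_def)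
  have 1: "io N x \<otimes>\<^bsub>LL\<^esub> io N y = io N (x \<otimes>\<^bsub>wr_group p N\<^esub> y)" by (rule mult_same[OF x y])
  have 2: "io N (x \<otimes>\<^bsub>wr_group p N\<^esub> y) \<otimes>\<^bsub>LL\<^esub> io N x' = io N (x \<otimes>\<^bsub>wr_group p N\<^esub> y \<otimes>\<^bsub>wr_group p N\<^esub> x')"
    by (rule mult_same[OF G.m_closed[OF x y] c(1)])
  have 3: "io N (x \<otimes>\<^bsub>wr_group p N\<^esub> y \<otimes>\<^bsub>wr_group p N\<^esub> x') \<otimes>\<^bsub>LL\<^esub> io N y'
      = io N (x \<otimes>\<^bsub>wr_group p N\<^esub> y \<otimes>\<^bsub>wr_group p N\<^esub> x' \<otimes>\<^bsub>wr_group p N\<^esub> y')"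
    by (rule mult_same[OF G.m_closed[OF G.m_closed[OF x y] c(1)] c(2)])
  have 4: "inv\<^bsub>LL\<^esub> (io N x) = io N x'" "inv\<^bsub>LL\<^esub> (io N y) = io N y'"
    using inv_io[OF x] inv_io[OF y] by (simp_all add: x'_def y'_def)
  show ?thesis unfolding commutator_def 4 1 2 3 by (simp add: x'_def y'_def)
qed

lemma D_inv:
  assumes c: "c \<in> D N"
  shows "inv\<^bsub>wr_group p N\<^esub> c \<in> D N"
proof -
  interpret G: group "wr_group p N" by (rule group_wr)
  have cc: "c \<in> carrier (wr_group p N)" using c by (simp add: D_def wr_carrier_eq)
  define c' where "c' = inv\<^bsub>wr_group p N\<^esub> c"
  have gc: "good p N c" "good p N c'" using cc G.inv_closed[OF cc] by (auto simp: c'_def wr_carrier_eq)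
  have cc': "c \<circ> c' = id" using G.r_inv[OF cc] by (simp add: c'_def wr_group_def)
  have "sig c' i = 0" if i: "i < N" for i
  proof -
    have "(sig c i + sig c' i) mod int (p (Suc i)) = 0"
      using sig_comp[OF gc i] cc' sig_id by simp
    moreover have "sig c i = 0" using c i by (simp add: D_def)
    moreover have "sig c' i mod int (p (Suc i)) = sig c' i" by (simp add: sig_def)
    ultimately show ?thesis by simp
  qed
  then show ?thesis using gc by (simp add: D_def c'_def)
qed

end


context wr
begin

definition UU where "UU = {io k g | k g. g \<in> D k}"

lemma D_carrier: "g \<in> D k \<Longrightarrow> g \<in> carrier (wr_group p k)"
  by (simp add: D_def wr_carrier_eq)

lemma UU_comm:
  assumes "z \<in> UU"
  shows "\<exists>x1\<in>carrier LL. \<exists>y1\<in>carrier LL. z = commutator LL x1 y1"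
proof -
  obtain k g where z: "z = io k g" "g \<in> D k" using assms by (auto simp: UU_def)
  obtain x y where xy: "x \<in> carrier (wr_group p k)" "y \<in> carrier (wr_group p k)"
    "g = commutator (wr_group p k) x y"
    using D_is_commutator[OF z(2)] by blast
  have "z = commutator LL (io k x) (io k y)" using comm_io[OF xy(1,2)] xy(3) z(1) by simp
  then show ?thesis using io_carrier[OF xy(1)] io_carrier[OF xy(2)] by blast
qed

lemma comm_UU:
  assumes xa: "xa \<in> carrier LL" and ya: "ya \<in> carrier LL"
  shows "commutator LL xa ya \<in> UU"
proof -
  obtain N x y where xy: "x \<in> carrier (wr_group p N)" "y \<in> carrier (wr_group p N)" "xa = io N x" "ya = io N y"
    by (rule lift2[OF xa ya])
  have "commutator LL xa ya = io N (commutator (wr_group p N) x y)"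
    using comm_io[OF xy(1,2)] xy(3,4) by simp
  then show ?thesis using D_commutator[OF xy(1,2)] by (auto simp: UU_def)
qed

lemma UU_mult:
  assumes "A \<in> UU" "B \<in> UU"
  shows "A \<otimes>\<^bsub>LL\<^esub> B \<in> UU"
proof -
  obtain k g where A: "A = io k g" "g \<in> D k" using assms(1) by (auto simp: UU_def)
  obtain m h where B: "B = io m h" "h \<in> D m" using assms(2) by (auto simp: UU_def)
  define N where "N = max k m"
  have kN: "k \<le> N" "m \<le> N" by (auto simp: N_def)
  have A': "A = io N (fiter (wr_ext p) k N g)" using io_lift[OF D_carrier[OF A(2)] kN(1)] A(1) by simp
  have B': "B = io N (fiter (wr_ext p) m N h)" using io_lift[OF D_carrier[OF B(2)] kN(2)] B(1) by simp
  have d: "fiter (wr_ext p) k N g \<in> D N" "fiter (wr_ext p) m N h \<in> D N"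
    using fiter_D[OF A(2) kN(1)] fiter_D[OF B(2) kN(2)] by auto
  have "A \<otimes>\<^bsub>LL\<^esub> B = io N (fiter (wr_ext p) k N g \<otimes>\<^bsub>wr_group p N\<^esub> fiter (wr_ext p) m N h)"
    using mult_same[OF D_carrier[OF d(1)] D_carrier[OF d(2)]] A' B' by simp
  also have "fiter (wr_ext p) k N g \<otimes>\<^bsub>wr_group p N\<^esub> fiter (wr_ext p) m N h \<in> D N"
    using D_comp[OF d] by (simp add: wr_group_def)
  ultimately show ?thesis by (auto simp: UU_def)
qed

lemma derived_UU: "derived LL (carrier LL) \<subseteq> UU"
proof
  interpret L: group LL by (rule group_LL)
  fix z assume "z \<in> derived LL (carrier LL)"
  then show "z \<in> UU"
    unfolding derived_def
  proof (induction rule: generate.induct)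
    case one
    have "id \<in> D 0" by (simp add: D_def good_id)
    then show ?case by (auto simp: UU_def one_LL)
  next
    case (incl h)
    then obtain xa ya where XY: "xa \<in> carrier LL" "ya \<in> carrier LL" "h = commutator LL xa ya"
      by (auto simp: commutator_def)
    then show ?case using comm_UU by simp
  next
    case (inv h)
    then obtain xa ya where XY: "xa \<in> carrier LL" "ya \<in> carrier LL"
        "h = xa \<otimes>\<^bsub>LL\<^esub> ya \<otimes>\<^bsub>LL\<^esub> inv\<^bsub>LL\<^esub> xa \<otimes>\<^bsub>LL\<^esub> inv\<^bsub>LL\<^esub> ya"
      by blast
    have "inv\<^bsub>LL\<^esub> h = commutator LL ya xa"
      unfolding XY(3) commutator_def using XY(1,2)
      by (simp add: L.inv_mult_group L.m_assoc)
    then show ?case using comm_UU XY by simp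
  next
    case (eng h1 h2)
    then show ?case using UU_mult by blast
  qed
qed

lemma comm_prod_1:
  assumes "z = commutator LL xa ya" "xa \<in> carrier LL" "ya \<in> carrier LL"
  shows "is_comm_prod LL 1 z"
proof -
  interpret L: group LL by (rule group_LL)
  have "commutator LL xa ya \<in> carrier LL" using assms by (simp add: commutator_def)
  then show ?thesis unfolding is_comm_prod_def using assms
    by (intro exI[of _ "[xa]"] exI[of _ "[ya]"]) simp
qed

lemma cl_le1: "z \<in> derived LL (carrier LL) \<Longrightarrow> commutator_length LL z \<le> 1"
  using derived_UU UU_comm comm_prod_1 unfolding commutator_length_def
  by (meson Least_le subsetD)

definition m0 :: "nat list \<Rightarrow> nat" where
  "m0 u = (if u = [0] then 1 else if u = [1] then p 2 - 1 else 0)"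

definition g0 where "g0 = ext2 1 id m0"

lemma g0_D: "g0 \<in> D 2"
proof -
  have gg: "good p 2 g0" using ext2_good[OF good_id[of 1]] by (simp add: g0_def numeral_2_eq_2)
  have p1: "2 \<le> p 1" "2 \<le> p 2" using p2[of 0] p2[of 1] by (simp_all add: numeral_2_eq_2)
  have s0: "sig g0 0 = 0"
  proof -
    have "L 0 = {[]}" by (auto simp: L_def tree_V_def)
    moreover have "rot g0 [] = 0" by (simp add: rot_def g0_def ext2_low)
    ultimately show ?thesis by (simp add: sig_def)
  qed
  have s1: "sig g0 1 = 0"
  proof -
    have L1: "u \<in> L 1 \<Longrightarrow> u \<in> tree_V p 1 \<and> length u = 1" for u by (simp add: L_def)
    have r: "rot g0 u = m0 u mod p 2" if "u \<in> L 1" for u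
      using rot_ext2[of u 1 id m0] L1[OF that] by (simp add: g0_def numeral_2_eq_2)
    have sub: "{[0], [1]} \<subseteq> L 1" using p1 by (auto simp: L_def tree_V_def)
    have "(\<Sum>u\<in>L 1. int (rot g0 u)) = (\<Sum>u\<in>L 1. int (m0 u mod p 2))"
      using r by simp
    also have "\<dots> = (\<Sum>u\<in>{[0], [1]}. int (m0 u mod p 2))"
      using sub finite_L[of 1] by (intro sum.mono_neutral_right) (auto simp: m0_def)
    also have "\<dots> = int (p 2)" using p1 by (simp add: m0_def)
    finally show ?thesis by (simp add: sig_def numeral_2_eq_2)
  qed
  have "sig g0 i = 0" if "i < 2" for i
    using that s0 s1 by (cases i) (auto simp: numeral_2_eq_2 less_Suc_eq)
  then show ?thesis using gg by (simp add: D_def)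
qed

lemma g0_val: "g0 [0, 0] = [0, 1]"
proof -
  have "[0] \<in> tree_V p 1" by (simp add: tree_V_def)
  then have "g0 ([0] @ [0]) = id [0] @ [(0 + m0 [0]) mod p (Suc 1)]"
    unfolding g0_def using ext2_top[of "[0]" 1 0 id m0] by simp
  moreover have "1 < p 2" using p2[of 1] by (simp add: numeral_2_eq_2)
  ultimately show ?thesis by (simp add: m0_def numeral_2_eq_2)
qed

lemma exists_nontriv: "\<exists>z\<in>derived LL (carrier LL). commutator_length LL z = 1"
proof -
  interpret L: group LL by (rule group_LL)
  obtain x y where xy: "x \<in> carrier (wr_group p 2)" "y \<in> carrier (wr_group p 2)"
    "g0 = commutator (wr_group p 2) x y"
    using D_is_commutator[OF g0_D] by blast
  define z where "z = io 2 g0"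
  have zc: "z = commutator LL (io 2 x) (io 2 y)" using comm_io[OF xy(1,2)] xy(3) by (simp add: z_def)
  have zd: "z \<in> derived LL (carrier LL)"
    unfolding derived_def zc commutator_def
    using io_carrier[OF xy(1)] io_carrier[OF xy(2)] by (intro generate.incl) blast
  have zne: "z \<noteq> \<one>\<^bsub>LL\<^esub>"
  proof
    assume "z = \<one>\<^bsub>LL\<^esub>"
    then have "io 2 g0 = io 0 id" by (simp add: z_def one_LL)
    moreover have "g0 \<in> carrier (wr_group p 2)" by (rule D_carrier[OF g0_D])
    moreover have "id \<in> carrier (wr_group p 0)" by (simp add: wr_carrier_eq good_id)
    ultimately obtain n where "fiter (wr_ext p) 2 n g0 = fiter (wr_ext p) 0 n id"
      using io_eq by blast
    then have "fiter (wr_ext p) 2 n g0 [0, 0] = [0, 0]" by (simp add: fiter_id)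
    moreover have "fiter (wr_ext p) 2 n g0 [0, 0] = g0 [0, 0]" by (rule fiter_low) simp
    ultimately show False using g0_val by simp
  qed
  have c1: "is_comm_prod LL 1 z" by (rule comm_prod_1[OF zc io_carrier[OF xy(1)] io_carrier[OF xy(2)]])
  have c0: "\<not> is_comm_prod LL 0 z" using zne by (simp add: is_comm_prod_def)
  have "commutator_length LL z = 1"
    unfolding commutator_length_def
  proof (rule Least_equality)
    show "is_comm_prod LL 1 z" by (rule c1)
    show "\<And>n. is_comm_prod LL n z \<Longrightarrow> 1 \<le> n" using c0 by (metis less_one not_le)
  qed
  then show ?thesis using zd by blast
qed

theorem cw_LL: "commutator_width LL = 1"
proof (rule antisym)
  show "commutator_width LL \<le> 1"
    unfolding commutator_width_def
    by (rule SUP_least) (metis cl_le1 enat_ord_simps(1) one_enat_def)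
  obtain z where z: "z \<in> derived LL (carrier LL)" "commutator_length LL z = 1"
    using exists_nontriv by blast
  show "1 \<le> commutator_width LL"
    unfolding commutator_width_def
    using z by (metis SUP_upper one_enat_def)
qed

end

theorem mainTheorem7:
  fixes p :: "nat \<Rightarrow> nat"
  assumes "\<And>i. 1 \<le> i \<Longrightarrow> 2 \<le> p i"
  shows "commutator_width (direct_limit (wr_group p) (wr_ext p)) = 1"
proof -
  interpret wr p
    by unfold_locales (use assms in simp)
  show ?thesis by (rule cw_LL)
qed

end
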